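(* Let $\Xi\subseteq\mathbb{R}^d$ be a Polish space with Borel $\sigma$-algebra, equipped with a norm $\|\cdot\|$, and let $\boldsymbol{\xi}_1,\boldsymbol{\xi}_2,\dots$ be independent $\Xi$-valued random variables, $\boldsymbol{\xi}_i$ having distribution $\mathbb{P}_i$. Let $\rho:\mathbb{R}_+\to\mathbb{R}_+$ with $\rho(0)=0$ satisfy $W(\mathbb{P}_i,\mathbb{P}_{i+k})\le\rho(k)$ for all $i\ge1$, $k\ge0$. Let $\mathcal{X}\subseteq\mathbb{R}^n$, $g:\mathbb{R}^n\times\mathbb{R}^d\to\mathbb{R}$ with $g(x,\cdot)$ measurable for every $x$, $\epsilon\in[0,1]$, $\alpha\in[0,1]$, $\gamma>0$, $N$ a positive integer and $r=(r_1,\dots,r_N)$ with $r_i>0$. Suppose there is $L\in(0,\infty)$ with $|g(x,\xi)-g(y,\xi)|\le L\|x-y\|_\infty$ for all $x,y\in\mathcal{X}$, $\xi\in\Xi$, and there is $D\in(0,\infty)$ with $\sup\{\|x-y\|_\infty:x,y\in\mathcal{X}\}\le D$. Define $U_{r_i}(\boldsymbol{\xi}_i):=\{u\in\Xi:\|u-\boldsymbol{\xi}_i\|\le r_i\}$, $$\widehat v^r_\gamma(x):=\frac1N\sum_{i=1}^N\mathbb{1}\{\exists\,u\in U_{r_i}(\boldsymbol{\xi}_i)\text{ with }g(x,u)+\gamma>0\},\qquad \widehat{\mathcal{X}}^r_{\alpha,\gamma}:=\{x\in\mathcal{X}:\widehat v^r_\gamma(x)\le\alpha\},$$ and $\mathcal{X}^{N+1}_\epsilon:=\{x\in\mathcal{X}:\mathbb{P}(g(x,\boldsymbol{\xi}_{N+1})>0)\le\epsilon\}$.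 Then $$\mathbb{P}\big(\widehat{\mathcal{X}}^r_{\alpha,\gamma}\not\subseteq\mathcal{X}^{N+1}_\epsilon\big)\le\left(\frac{LD}{\gamma}+1\right)^n\Psi(\alpha N;p_1,\dots,p_N),\qquad p_i:=\left(\epsilon-\frac{\rho(N+1-i)}{r_i}\right)_+,\ i=1,\dots,N.$$
   Context: The 1-Wasserstein distance between probability measures $\mathbb{P},\mathbb{P}'$ on $\Xi$ is $W(\mathbb{P},\mathbb{P}'):=\inf_{\pi\in\Pi(\mathbb{P},\mathbb{P}')}\int_{\Xi\times\Xi}\|\xi-\xi'\|\,\pi(d\xi,d\xi')$, where $\Pi(\mathbb{P},\mathbb{P}')$ is the set of couplings with marginals $\mathbb{P},\mathbb{P}'$. $(x)_+=\max\{0,x\}$; $\mathbb{1}\{\cdot\}$ is the indicator function. For $q_1,\dots,q_N\in[0,1]$, $\Psi(z;q_1,\dots,q_N)$, $z\in[0,N]$, is the CDF of a Poisson binomial random variable: $\Psi(z;q_1,\dots,q_N)=\sum_{k=0}^{\lfloor z\rfloor}\sum_{A\subseteq[N],|A|=k}\prod_{i\in A}q_i\prod_{i\notin A}(1-q_i)$. *)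

theory Defs
  imports "HOL-Analysis.Analysis" "HOL-Probability.Probability"
begin

definition is_norm :: "('a::real_vector \<Rightarrow> real) \<Rightarrow> bool" where
  "is_norm nrm \<longleftrightarrow> (\<forall>x. 0 \<le> nrm x) \<and> (\<forall>x. nrm x = 0 \<longleftrightarrow> x = 0)
     \<and> (\<forall>x y. nrm (x + y) \<le> nrm x + nrm y) \<and> (\<forall>c x. nrm (c *\<^sub>R x) = \<bar>c\<bar> * nrm x)"

definition polish_subset :: "'a::topological_space set \<Rightarrow> bool" where
  "polish_subset S \<longleftrightarrow> completely_metrizable_space (top_of_set S) \<and> separable_space (top_of_set S)"

definition couplings :: "'a::topological_space measure \<Rightarrow> 'a measure \<Rightarrow> ('a \<times> 'a) measure set" where
  "couplings P Q = {\<pi>. prob_space \<pi> \<and> sets \<pi> = sets (borel \<Otimes>\<^sub>M borel)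
       \<and> distr \<pi> borel fst = P \<and> distr \<pi> borel snd = Q}"

definition wasserstein1 :: "('a::{real_vector,topological_space} \<Rightarrow> real) \<Rightarrow> 'a measure \<Rightarrow> 'a measure \<Rightarrow> ennreal" where
  "wasserstein1 nrm P Q = (INF \<pi>\<in>couplings P Q. \<integral>\<^sup>+ z. ennreal (nrm (fst z - snd z)) \<partial>\<pi>)"

definition poisson_binomial_cdf :: "nat \<Rightarrow> (nat \<Rightarrow> real) \<Rightarrow> real \<Rightarrow> real" where
  "poisson_binomial_cdf N q z =
     (\<Sum>k\<in>{0..nat \<lfloor>z\<rfloor>}. \<Sum>A\<in>{A. A \<subseteq> {1..N} \<and> card A = k}.
        (\<Prod>i\<in>A. q i) * (\<Prod>i\<in>{1..N} - A. 1 - q i))"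

end

theory Submission
  imports Defs
begin


lemma polish_borel:
  fixes Xi :: "'a::{metric_space,second_countable_topology} set"
  assumes "polish_subset Xi" shows "Xi \<in> sets borel"
proof -
  have "completely_metrizable_space (top_of_set Xi)" using assms unfolding polish_subset_def by blast
  then have "gdelta_in euclidean Xi"
    by (intro completely_metrizable_space_imp_gdelta_in) (auto simp: metrizable_space_euclidean)
  from this[unfolded gdelta_in_descending]
  obtain C where C: "(\<forall>n. openin euclidean (C n)) \<and> (\<forall>n. C(Suc n) \<subseteq> C n) \<and> \<Inter>(range C) = Xi"
    by (rule exE)
  have "\<Inter>(range C) \<in> sets borel"
    using C by (intro sets.countable_INT') auto
  then show ?thesis using C by simp
qed

lemma is_norm_sum:
  assumes "is_norm nrm" "finite B"
  shows "nrm (\<Sum>b\<in>B. f b) \<le> (\<Sum>b\<in>B. nrm (f b))"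
  using assms(2)
proof (induction B rule: finite_induct)
  case empty
  have "nrm 0 = 0" using assms(1) by (simp add: is_norm_def)
  then show ?case by simp
next
  case (insert x F)
  then show ?case using assms(1) unfolding is_norm_def
    by (smt (verit) sum.insert)
qed

lemma is_norm_minus:
  assumes "is_norm nrm" shows "nrm (x - y) = nrm (y - x)"
proof -
  have "nrm ((-1) *\<^sub>R (y - x)) = \<bar>-1\<bar> * nrm (y - x)" using assms unfolding is_norm_def by blast
  then show ?thesis by simp
qed

lemma is_norm_bound:
  fixes nrm :: "'a::euclidean_space \<Rightarrow> real"
  assumes "is_norm nrm"
  shows "nrm x \<le> norm x * (\<Sum>b\<in>Basis. nrm b)"
proof -
  have "nrm x = nrm (\<Sum>b\<in>Basis. (x \<bullet> b) *\<^sub>R b)" by (simp add: euclidean_representation)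
  also have "\<dots> \<le> (\<Sum>b\<in>Basis. nrm ((x \<bullet> b) *\<^sub>R b))" by (rule is_norm_sum[OF assms]) simp
  also have "\<dots> = (\<Sum>b\<in>Basis. \<bar>x \<bullet> b\<bar> * nrm b)" using assms by (simp add: is_norm_def)
  also have "\<dots> \<le> (\<Sum>b\<in>Basis. norm x * nrm b)"
    apply (rule sum_mono) apply (rule mult_right_mono)
    using assms by (auto simp: is_norm_def Basis_le_norm)
  finally show ?thesis by (simp add: sum_distrib_left)
qed

lemma is_norm_continuous:
  fixes nrm :: "'a::euclidean_space \<Rightarrow> real"
  assumes "is_norm nrm"
  shows "continuous_on UNIV nrm"
proof -
  define C where "C = (\<Sum>b\<in>Basis. nrm (b::'a))"
  have C0: "C \<ge> 0" unfolding C_def using assms by (auto simp: is_norm_def intro: sum_nonneg)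
  have "\<bar>nrm x - nrm y\<bar> \<le> C * dist x y" for x y
  proof -
    have t1: "nrm x \<le> nrm (x - y) + nrm y" using assms unfolding is_norm_def
      by (metis diff_add_cancel)
    have t2: "nrm y \<le> nrm (y - x) + nrm x" using assms unfolding is_norm_def
      by (metis diff_add_cancel)
    have "nrm (x - y) \<le> C * dist x y" using is_norm_bound[OF assms, of "x - y"]
      by (simp add: C_def dist_norm mult.commute)
    then show ?thesis using t1 t2 is_norm_minus[OF assms, of x y] by linarith
  qed
  then have "C-lipschitz_on UNIV nrm" using C0
    by (intro lipschitz_onI) (auto simp: dist_real_def)
  then show ?thesis by (rule lipschitz_on_continuous_on)
qed



definition wK :: "nat set \<Rightarrow> (nat \<Rightarrow> real) \<Rightarrow> nat set \<Rightarrow> real" where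
  "wK T s K = (\<Prod>i\<in>K. s i) * (\<Prod>i\<in>T - K. 1 - s i)"

definition FP :: "nat set \<Rightarrow> (nat \<Rightarrow> real) \<Rightarrow> (nat \<Rightarrow> bool) \<Rightarrow> real" where
  "FP T s P = (\<Sum>K\<in>Pow T. if P (card K) then wK T s K else 0)"

lemma wK_nonneg: "(\<And>i. i \<in> T \<Longrightarrow> 0 \<le> s i \<and> s i \<le> 1) \<Longrightarrow> K \<subseteq> T \<Longrightarrow> 0 \<le> wK T s K"
  unfolding wK_def by (intro mult_nonneg_nonneg prod_nonneg) auto

lemma FP_insert:
  assumes "finite T" "j \<notin> T"
  shows "FP (insert j T) s P = (1 - s j) * FP T s P + s j * FP T s (\<lambda>k. P (Suc k))"
proof -
  have disj: "Pow T \<inter> insert j ` Pow T = {}" using assms by auto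
  have inj: "inj_on (insert j) (Pow T)" using assms unfolding inj_on_def
    by (metis PowD insert_ident subsetD)
  have w1: "wK (insert j T) s K = (1 - s j) * wK T s K" if "K \<subseteq> T" for K
  proof -
    have "insert j T - K = insert j (T - K)" using that assms by auto
    then show ?thesis unfolding wK_def using assms that
      by (simp add: finite_subset)
  qed
  have w2: "wK (insert j T) s (insert j K) = s j * wK T s K" if "K \<subseteq> T" for K
  proof -
    have "insert j T - insert j K = T - K" using that assms by auto
    moreover have "j \<notin> K" using that assms by auto
    ultimately show ?thesis unfolding wK_def using assms that
      by (simp add: finite_subset)
  qed
  have c: "card (insert j K) = Suc (card K)" if "K \<subseteq> T" for K
    using that assms by (meson card_insert_disjoint finite_subset subsetD)
  have "FP (insert j T) s P = (\<Sum>K\<in>Pow T. if P (card K) then wK (insert j T) s K else 0)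
      + (\<Sum>K\<in>insert j ` Pow T. if P (card K) then wK (insert j T) s K else 0)"
    unfolding FP_def Pow_insert using assms disj by (intro sum.union_disjoint) auto
  also have "(\<Sum>K\<in>insert j ` Pow T. if P (card K) then wK (insert j T) s K else 0)
      = (\<Sum>K\<in>Pow T. if P (card (insert j K)) then wK (insert j T) s (insert j K) else 0)"
    by (rule sum.reindex[OF inj, unfolded comp_def])
  also have "\<dots> = s j * FP T s (\<lambda>k. P (Suc k))"
    unfolding FP_def sum_distrib_left by (intro sum.cong) (auto simp: w2 c)
  also have "(\<Sum>K\<in>Pow T. if P (card K) then wK (insert j T) s K else 0) = (1 - s j) * FP T s P"
    unfolding FP_def sum_distrib_left by (intro sum.cong) (auto simp: w1)
  finally show ?thesis by simp
qed

lemma FP_nonneg: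
  assumes "finite T" "\<And>i. i \<in> T \<Longrightarrow> 0 \<le> s i \<and> s i \<le> 1"
  shows "0 \<le> FP T s P"
  unfolding FP_def using assms by (intro sum_nonneg) (auto intro: wK_nonneg)

lemma FP_mono_pred:
  assumes "finite T" "\<And>i. i \<in> T \<Longrightarrow> 0 \<le> s i \<and> s i \<le> 1" "\<And>k. Q k \<Longrightarrow> P k"
  shows "FP T s Q \<le> FP T s P"
  unfolding FP_def using assms by (intro sum_mono) (auto intro: wK_nonneg)

lemma FP_mono:
  assumes "finite T" "\<And>i. i \<in> T \<Longrightarrow> 0 \<le> p i \<and> p i \<le> s i \<and> s i \<le> 1"
    and "\<And>k k'. P k \<Longrightarrow> k' \<le> k \<Longrightarrow> P k'"
  shows "FP T s P \<le> FP T p P"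
  using assms
proof (induction T arbitrary: P rule: finite_induct)
  case empty
  show ?case unfolding FP_def wK_def Pow_empty by simp
next
  case (insert j T)
  have hs: "\<And>i. i \<in> T \<Longrightarrow> 0 \<le> s i \<and> s i \<le> 1" "\<And>i. i \<in> T \<Longrightarrow> 0 \<le> p i \<and> p i \<le> 1"
    using insert.prems(1) by force+
  define as where "as = FP T s P"
  define bs where "bs = FP T s (\<lambda>k. P (Suc k))"
  define ap where "ap = FP T p P"
  define bp where "bp = FP T p (\<lambda>k. P (Suc k))"
  have "as \<le> ap" unfolding as_def ap_def
    by (rule insert.IH) (use insert.prems in auto)
  moreover have "bs \<le> bp" unfolding bs_def bp_def
    by (rule insert.IH) (use insert.prems in auto)
  moreover have "bp \<le> ap" unfolding bp_def ap_def
    by (rule FP_mono_pred[OF insert.hyps(1) hs(2)]) (use insert.prems in auto)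
  moreover have j: "0 \<le> p j" "p j \<le> s j" "s j \<le> 1" using insert.prems(1) by auto
  ultimately have "(1 - s j) * as + s j * bs \<le> (1 - p j) * ap + p j * bp"
  proof -
    assume a: "as \<le> ap" "bs \<le> bp" "bp \<le> ap"
    have "(1 - s j) * as \<le> (1 - s j) * ap" using a j by (intro mult_left_mono) auto
    moreover have "s j * bs \<le> s j * bp" using a j by (intro mult_left_mono) auto
    moreover have "(1 - s j) * ap + s j * bp \<le> (1 - p j) * ap + p j * bp"
    proof -
      have "(s j - p j) * (ap - bp) \<ge> 0" using a j by auto
      then show ?thesis by (simp add: algebra_simps)
    qed
    ultimately show ?thesis by linarith
  qed
  then show ?case
    unfolding FP_insert[OF insert.hyps] as_def bs_def ap_def bp_def .
qed

lemma poisson_binomial_cdf_FP: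
  "poisson_binomial_cdf N p z = FP {1..N} p (\<lambda>k. k \<le> nat \<lfloor>z\<rfloor>)"
proof -
  define f where "f = (\<lambda>A. (\<Prod>i\<in>A. p i) * (\<Prod>i\<in>{1..N} - A. 1 - p i))"
  have "FP {1..N} p (\<lambda>k. k \<le> nat \<lfloor>z\<rfloor>) = (\<Sum>K\<in>{K\<in>Pow {1..N}. card K \<le> nat \<lfloor>z\<rfloor>}. f K)"
    unfolding FP_def wK_def f_def by (subst sum.inter_filter[symmetric]) auto
  also have "{K\<in>Pow {1..N}. card K \<le> nat \<lfloor>z\<rfloor>} = (\<Union>k\<in>{0..nat \<lfloor>z\<rfloor>}. {A. A \<subseteq> {1..N} \<and> card A = k})"
    by auto
  also have "sum f \<dots> = (\<Sum>k\<in>{0..nat \<lfloor>z\<rfloor>}. sum f {A. A \<subseteq> {1..N} \<and> card A = k})"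
    by (intro sum.UNION_disjoint) auto
  finally show ?thesis unfolding poisson_binomial_cdf_def f_def by simp
qed



lemma count_set_sets:
  assumes M: "prob_space M" and T: "finite T" "T \<noteq> {}"
    and Y: "\<And>i. i \<in> T \<Longrightarrow> Y i \<in> sets M"
  shows "{\<omega> \<in> space M. P (card {i\<in>T. \<omega> \<in> Y i})} \<in> sets M"
proof -
  interpret prob_space M by fact
  define E where "E = (\<lambda>K. \<Inter>i\<in>T. if i \<in> K then Y i else space M - Y i)"
  have E_eq: "E K = {\<omega> \<in> space M. {i\<in>T. \<omega> \<in> Y i} = K}" if "K \<subseteq> T" for K
  proof -
    obtain t where t: "t \<in> T" using T by auto
    have "E K \<subseteq> space M"
    proof
      fix \<omega> assume "\<omega> \<in> E K"
      then have "\<omega> \<in> (if t \<in> K then Y t else space M - Y t)" unfolding E_def using t by blast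
      then show "\<omega> \<in> space M" using Y[OF t] sets.sets_into_space by (auto split: if_splits)
    qed
    show ?thesis
    proof (intro set_eqI iffI)
      fix \<omega> assume a: "\<omega> \<in> E K"
      then have sp: "\<omega> \<in> space M" using \<open>E K \<subseteq> space M\<close> by blast
      have all: "\<forall>i\<in>T. \<omega> \<in> (if i \<in> K then Y i else space M - Y i)" using a unfolding E_def by blast
      have "{i\<in>T. \<omega> \<in> Y i} = K"
      proof (intro set_eqI iffI)
        fix i assume "i \<in> {i\<in>T. \<omega> \<in> Y i}"
        then show "i \<in> K" using all by (metis (mono_tags, lifting) DiffD2 mem_Collect_eq)
      next
        fix i assume "i \<in> K"
        moreover have "i \<in> T" using \<open>i \<in> K\<close> that by blast
        ultimately show "i \<in> {i\<in>T. \<omega> \<in> Y i}" using all by (metis (mono_tags, lifting) mem_Collect_eq)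
      qed
      then show "\<omega> \<in> {\<omega> \<in> space M. {i\<in>T. \<omega> \<in> Y i} = K}" using sp by blast
    next
      fix \<omega> assume "\<omega> \<in> {\<omega> \<in> space M. {i\<in>T. \<omega> \<in> Y i} = K}"
      then show "\<omega> \<in> E K" unfolding E_def by auto
    qed
  qed
  have Ein: "E K \<in> sets M" if "K \<subseteq> T" for K
    unfolding E_def using T Y by (intro sets.finite_INT) auto
  have set_eq: "{\<omega> \<in> space M. P (card {i\<in>T. \<omega> \<in> Y i})} = (\<Union>K\<in>{K\<in>Pow T. P (card K)}. E K)"
  proof -
    have "(\<Union>K\<in>{K\<in>Pow T. P (card K)}. E K) = (\<Union>K\<in>{K\<in>Pow T. P (card K)}. {\<omega> \<in> space M. {i\<in>T. \<omega> \<in> Y i} = K})"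
      using E_eq by (intro SUP_cong) auto
    also have "\<dots> = {\<omega> \<in> space M. P (card {i\<in>T. \<omega> \<in> Y i})}" by auto
    finally show ?thesis by simp
  qed
  show ?thesis unfolding set_eq using T Ein by (intro sets.finite_UN) auto
qed

lemma prob_count_FP:
  assumes M: "prob_space M" and T: "finite T" "T \<noteq> {}"
    and Y: "\<And>i. i \<in> T \<Longrightarrow> Y i \<in> sets M"
    and ind: "\<And>K. K \<subseteq> T \<Longrightarrow> measure M (\<Inter>i\<in>T. if i \<in> K then Y i else space M - Y i)
                 = (\<Prod>i\<in>T. if i \<in> K then measure M (Y i) else 1 - measure M (Y i))"
  shows "measure M {\<omega> \<in> space M. P (card {i\<in>T. \<omega> \<in> Y i})} = FP T (\<lambda>i. measure M (Y i)) P"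
proof -
  interpret prob_space M by fact
  define E where "E = (\<lambda>K. \<Inter>i\<in>T. if i \<in> K then Y i else space M - Y i)"
  have E_eq: "E K = {\<omega> \<in> space M. {i\<in>T. \<omega> \<in> Y i} = K}" if "K \<subseteq> T" for K
  proof -
    obtain t where t: "t \<in> T" using T by auto
    have "E K \<subseteq> space M"
    proof
      fix \<omega> assume "\<omega> \<in> E K"
      then have "\<omega> \<in> (if t \<in> K then Y t else space M - Y t)" unfolding E_def using t by blast
      then show "\<omega> \<in> space M" using Y[OF t] sets.sets_into_space by (auto split: if_splits)
    qed
    show ?thesis
    proof (intro set_eqI iffI)
      fix \<omega> assume a: "\<omega> \<in> E K"
      then have sp: "\<omega> \<in> space M" using \<open>E K \<subseteq> space M\<close> by blast
      have all: "\<forall>i\<in>T. \<omega> \<in> (if i \<in> K then Y i else space M - Y i)" using a unfolding E_def by blast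
      have "{i\<in>T. \<omega> \<in> Y i} = K"
      proof (intro set_eqI iffI)
        fix i assume "i \<in> {i\<in>T. \<omega> \<in> Y i}"
        then show "i \<in> K" using all by (metis (mono_tags, lifting) DiffD2 mem_Collect_eq)
      next
        fix i assume "i \<in> K"
        moreover have "i \<in> T" using \<open>i \<in> K\<close> that by blast
        ultimately show "i \<in> {i\<in>T. \<omega> \<in> Y i}" using all by (metis (mono_tags, lifting) mem_Collect_eq)
      qed
      then show "\<omega> \<in> {\<omega> \<in> space M. {i\<in>T. \<omega> \<in> Y i} = K}" using sp by blast
    next
      fix \<omega> assume "\<omega> \<in> {\<omega> \<in> space M. {i\<in>T. \<omega> \<in> Y i} = K}"
      then show "\<omega> \<in> E K" unfolding E_def by auto
    qed
  qed
  have Ein: "E K \<in> sets M" if "K \<subseteq> T" for K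
    unfolding E_def using T Y by (intro sets.finite_INT) auto
  have set_eq: "{\<omega> \<in> space M. P (card {i\<in>T. \<omega> \<in> Y i})} = (\<Union>K\<in>{K\<in>Pow T. P (card K)}. E K)"
  proof -
    have "(\<Union>K\<in>{K\<in>Pow T. P (card K)}. E K) = (\<Union>K\<in>{K\<in>Pow T. P (card K)}. {\<omega> \<in> space M. {i\<in>T. \<omega> \<in> Y i} = K})"
      using E_eq by (intro SUP_cong) auto
    also have "\<dots> = {\<omega> \<in> space M. P (card {i\<in>T. \<omega> \<in> Y i})}" by auto
    finally show ?thesis by simp
  qed
  have "measure M (\<Union>K\<in>{K\<in>Pow T. P (card K)}. E K) = (\<Sum>K\<in>{K\<in>Pow T. P (card K)}. measure M (E K))"
  proof (rule measure_finite_Union)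
    show "disjoint_family_on E {K \<in> Pow T. P (card K)}"
      unfolding disjoint_family_on_def by (auto simp: E_eq)
  qed (use T Ein in auto)
  also have "\<dots> = (\<Sum>K\<in>Pow T. if P (card K) then measure M (E K) else 0)"
    by (subst sum.inter_filter[symmetric]) (use T in auto)
  also have "\<dots> = FP T (\<lambda>i. measure M (Y i)) P"
    unfolding FP_def
  proof (intro sum.cong refl)
    fix K assume K: "K \<in> Pow T"
    have "measure M (E K) = (\<Prod>i\<in>T. if i \<in> K then measure M (Y i) else 1 - measure M (Y i))"
      unfolding E_def using K by (intro ind) auto
    also have "\<dots> = wK T (\<lambda>i. measure M (Y i)) K"
      unfolding wK_def using K T
      by (subst prod.If_cases) (auto simp: Int_absorb1 Diff_eq intro!: arg_cong2[where f="(*)"] prod.cong)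
    finally show "(if P (card K) then measure M (E K) else 0) =
          (if P (card K) then wK T (\<lambda>i. measure M (Y i)) K else 0)" by simp
  qed
  finally show ?thesis using set_eq by simp
qed



lemma nrm_shift_cont:
  fixes nrm :: "'a::euclidean_space \<Rightarrow> real"
  assumes "is_norm nrm" shows "continuous_on UNIV (\<lambda>z. nrm (u - z))"
proof -
  have "continuous_on UNIV (\<lambda>z. u - z)" by (intro continuous_intros)
  then show ?thesis using continuous_on_compose2[OF is_norm_continuous[OF assms], of UNIV "\<lambda>z. u - z"]
    by auto
qed

lemma open_S:
  fixes nrm :: "'a::euclidean_space \<Rightarrow> real"
  assumes "is_norm nrm" shows "open {z. \<exists>u\<in>G. nrm (u - z) < r}"
proof -
  have "{z. \<exists>u\<in>G. nrm (u - z) < r} = (\<Union>u\<in>G. {z. nrm (u - z) < r})" by auto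
  moreover have "open {z. nrm (u - z) < r}" for u
    by (rule open_Collect_less[OF nrm_shift_cont[OF assms]]) simp
  ultimately show ?thesis by auto
qed

lemma coupling_bound:
  fixes nrm :: "real^'d \<Rightarrow> real" and \<xi>a \<xi>b :: "'w \<Rightarrow> real^'d"
  assumes M: "prob_space M" and nrm: "is_norm nrm"
    and ma: "\<xi>a \<in> borel_measurable M" and mb: "\<xi>b \<in> borel_measurable M"
    and W: "wasserstein1 nrm (distr M borel \<xi>a) (distr M borel \<xi>b) \<le> ennreal \<rho>"
    and \<rho>: "\<rho> \<ge> 0" and r: "r > 0" and \<delta>: "\<delta> > 0" and G: "G \<in> sets borel"
  shows "measure M (\<xi>b -` G \<inter> space M) - (\<rho> + \<delta>) / r
           \<le> measure M (\<xi>a -` {z. \<exists>u\<in>G. nrm (u - z) < r} \<inter> space M)"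
proof -
  define S where "S = {z. \<exists>u\<in>G. nrm (u - z) < r}"
  have Sb: "S \<in> sets borel" unfolding S_def using open_S[OF nrm] by simp
  have "wasserstein1 nrm (distr M borel \<xi>a) (distr M borel \<xi>b) < ennreal (\<rho> + \<delta>)"
    using W \<rho> \<delta> by (meson ennreal_lessI le_less_trans less_add_same_cancel1 order.strict_trans2 add_pos_nonneg)
  then obtain \<pi> where \<pi>: "\<pi> \<in> couplings (distr M borel \<xi>a) (distr M borel \<xi>b)"
    and cost: "(\<integral>\<^sup>+ z. ennreal (nrm (fst z - snd z)) \<partial>\<pi>) < ennreal (\<rho> + \<delta>)"
    unfolding wasserstein1_def by (auto simp: INF_less_iff)
  have P\<pi>: "prob_space \<pi>" and s\<pi>: "sets \<pi> = sets (borel \<Otimes>\<^sub>M borel)"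
    and fa: "distr \<pi> borel fst = distr M borel \<xi>a" and fb: "distr \<pi> borel snd = distr M borel \<xi>b"
    using \<pi> unfolding couplings_def by auto
  interpret P: prob_space \<pi> by fact
  have s\<pi>': "sets \<pi> = sets (borel :: ((real^'d) \<times> (real^'d)) measure)"
    using s\<pi> borel_prod[where 'a="real^'d" and 'b="real^'d"] by metis
  have mfst: "fst \<in> measurable \<pi> (borel :: (real^'d) measure)"
    unfolding measurable_cong_sets[OF s\<pi> refl] by (rule measurable_fst)
  have msnd: "snd \<in> measurable \<pi> (borel :: (real^'d) measure)"
    unfolding measurable_cong_sets[OF s\<pi> refl] by (rule measurable_snd)
  define c where "c = (\<lambda>z::(real^'d) \<times> (real^'d). nrm (fst z - snd z))"
  have "continuous_on UNIV (\<lambda>z::(real^'d) \<times> (real^'d). fst z - snd z)" by (intro continuous_intros)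
  then have cc: "continuous_on UNIV c" unfolding c_def
    using continuous_on_compose2[OF is_norm_continuous[OF nrm], of UNIV "\<lambda>z::(real^'d) \<times> (real^'d). fst z - snd z"]
    by auto
  have mc: "c \<in> borel_measurable \<pi>"
    unfolding measurable_cong_sets[OF s\<pi>' refl] by (rule borel_measurable_continuous_onI[OF cc])
  define B where "B = {z \<in> space \<pi>. r \<le> c z}"
  have "B = c -` {r..} \<inter> space \<pi>" unfolding B_def by auto
  then have Bm: "B \<in> sets \<pi>" using measurable_sets[OF mc, of "{r..}"] by simp
  have "(\<integral>\<^sup>+ z. ennreal r * indicator B z \<partial>\<pi>) \<le> (\<integral>\<^sup>+ z. ennreal (c z) \<partial>\<pi>)"
    by (intro nn_integral_mono) (auto simp: B_def indicator_def ennreal_leI)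
  then have "ennreal r * emeasure \<pi> B < ennreal (\<rho> + \<delta>)"
    using cost Bm by (simp add: nn_integral_cmult_indicator c_def)
  then have "ennreal (r * measure \<pi> B) < ennreal (\<rho> + \<delta>)"
    using r by (simp add: P.emeasure_eq_measure ennreal_mult)
  moreover have "0 \<le> r * measure \<pi> B" using r by simp
  ultimately have "r * measure \<pi> B < \<rho> + \<delta>"
    using ennreal_less_iff by blast
  then have mB: "measure \<pi> B \<le> (\<rho> + \<delta>) / r"
    using r by (simp add: pos_le_divide_eq mult.commute)
  have eqb: "measure \<pi> (snd -` G \<inter> space \<pi>) = measure M (\<xi>b -` G \<inter> space M)"
    using measure_distr[OF msnd G] measure_distr[OF mb G] fb by simp
  have eqa: "measure \<pi> (fst -` S \<inter> space \<pi>) = measure M (\<xi>a -` S \<inter> space M)"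
    using measure_distr[OF mfst Sb] measure_distr[OF ma Sb] fa by simp
  have sub: "snd -` G \<inter> space \<pi> \<subseteq> (fst -` S \<inter> space \<pi>) \<union> B"
  proof
    fix z assume z: "z \<in> snd -` G \<inter> space \<pi>"
    show "z \<in> (fst -` S \<inter> space \<pi>) \<union> B"
    proof (cases "r \<le> c z")
      case True then show ?thesis using z by (auto simp: B_def)
    next
      case False
      then have "nrm (snd z - fst z) < r" using is_norm_minus[OF nrm] by (simp add: c_def)
      then show ?thesis using z by (auto simp: S_def)
    qed
  qed
  have m1: "fst -` S \<inter> space \<pi> \<in> sets \<pi>" using mfst Sb by (simp add: measurable_sets)
  have m2: "snd -` G \<inter> space \<pi> \<in> sets \<pi>" using msnd G by (simp add: measurable_sets)
  have "measure \<pi> (snd -` G \<inter> space \<pi>) \<le> measure \<pi> ((fst -` S \<inter> space \<pi>) \<union> B)"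
    using sub m1 Bm by (intro P.finite_measure_mono) auto
  also have "\<dots> \<le> measure \<pi> (fst -` S \<inter> space \<pi>) + measure \<pi> B"
    using m1 Bm by (intro measure_Un_le) auto
  finally show ?thesis using eqa eqb mB unfolding S_def by linarith
qed



lemma cell_cover:
  fixes X :: "(real^'n) set"
  assumes X: "X \<noteq> {}" and s: "s > 0"
    and diam: "\<And>x y. x \<in> X \<Longrightarrow> y \<in> X \<Longrightarrow> infnorm (x - y) \<le> D"
  shows "\<exists>cell :: real^'n \<Rightarrow> ('n \<Rightarrow> nat). (\<forall>x\<in>X. cell x \<in> (\<Pi>\<^sub>E j\<in>UNIV. {..nat \<lfloor>D / s\<rfloor>}))
           \<and> (\<forall>x\<in>X. \<forall>y\<in>X. cell x = cell y \<longrightarrow> infnorm (x - y) \<le> s)"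
proof -
  define m where "m = (\<lambda>j. Inf ((\<lambda>x. x $ j) ` X))"
  have cd: "\<bar>x $ j - y $ j\<bar> \<le> D" if "x \<in> X" "y \<in> X" for x y j
    using component_le_infnorm_cart[of "x - y" j] diam[OF that] by simp
  have m1: "m j \<le> x $ j" if "x \<in> X" for x j
  proof -
    have "x $ j - D \<le> y $ j" if "y \<in> X" for y
      using cd[OF \<open>x \<in> X\<close> that, of j] by (simp add: abs_diff_le_iff)
    then have "bdd_below ((\<lambda>x. x $ j) ` X)"
      by (intro bdd_belowI[of _ "x $ j - D"]) auto
    then show ?thesis unfolding m_def using that by (auto intro: cInf_lower)
  qed
  have m2: "x $ j - D \<le> m j" if "x \<in> X" for x j
    unfolding m_def using X cd that
    by (intro cInf_greatest) (auto simp: abs_diff_le_iff)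
  define cell where "cell = (\<lambda>x::real^'n. \<lambda>j. nat \<lfloor>(x $ j - m j) / s\<rfloor>)"
  have "cell x \<in> (\<Pi>\<^sub>E j\<in>UNIV. {..nat \<lfloor>D / s\<rfloor>})" if "x \<in> X" for x
  proof -
    have "cell x j \<le> nat \<lfloor>D / s\<rfloor>" for j
    proof -
      have "(x $ j - m j) / s \<le> D / s" using m2[OF that, of j] s by (intro divide_right_mono) auto
      then show ?thesis unfolding cell_def by (intro nat_mono floor_mono)
    qed
    then show ?thesis by (auto simp: PiE_iff)
  qed
  moreover have "infnorm (x - y) \<le> s" if "x \<in> X" "y \<in> X" "cell x = cell y" for x y
  proof -
    have "\<bar>(x - y) $ j\<bar> \<le> s" for j
    proof -
      define a where "a = (x $ j - m j) / s"
      define b where "b = (y $ j - m j) / s"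
      have a0: "a \<ge> 0" "b \<ge> 0" unfolding a_def b_def using m1 that s by auto
      have "nat \<lfloor>a\<rfloor> = nat \<lfloor>b\<rfloor>" using fun_cong[OF that(3), of j] unfolding cell_def a_def b_def by simp
      moreover have "\<lfloor>a\<rfloor> \<ge> 0" "\<lfloor>b\<rfloor> \<ge> 0" using a0 by auto
      ultimately have "\<lfloor>a\<rfloor> = \<lfloor>b\<rfloor>" by (metis nat_0_le)
      then have "\<bar>a - b\<bar> < 1" by linarith
      then have "\<bar>x $ j - y $ j\<bar> < s" unfolding a_def b_def using s
        by (simp add: diff_divide_distrib[symmetric] abs_divide)
      then show ?thesis by simp
    qed
    then show ?thesis unfolding infnorm_cart by (intro cSup_least) auto
  qed
  ultimately show ?thesis by blast
qed

theorem theorem4: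
  fixes M :: "'w measure"
    and Xi :: "(real^'d) set"
    and nrm :: "real^'d \<Rightarrow> real"
    and \<xi> :: "nat \<Rightarrow> 'w \<Rightarrow> real^'d"
    and \<rho> :: "real \<Rightarrow> real"
    and X :: "(real^'n) set"
    and g :: "real^'n \<Rightarrow> real^'d \<Rightarrow> real"
    and \<epsilon> \<alpha> \<gamma> L D :: real
    and N :: nat
    and r :: "nat \<Rightarrow> real"
  assumes M: "prob_space M"
    and Xi_polish: "polish_subset Xi"
    and nrm: "is_norm nrm"
    and indep: "prob_space.indep_vars M (\<lambda>_. borel) \<xi> {1..}"
    and \<xi>_in: "\<And>i \<omega>. i \<ge> 1 \<Longrightarrow> \<omega> \<in> space M \<Longrightarrow> \<xi> i \<omega> \<in> Xi"
    and \<rho>_nonneg: "\<And>t. t \<ge> 0 \<Longrightarrow> \<rho> t \<ge> 0"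
    and \<rho>0: "\<rho> 0 = 0"
    and \<rho>_bound: "\<And>i k. i \<ge> 1 \<Longrightarrow>
        wasserstein1 nrm (distr M borel (\<xi> i)) (distr M borel (\<xi> (i + k))) \<le> ennreal (\<rho> (real k))"
    and g_meas: "\<And>x. g x \<in> borel_measurable borel"
    and \<epsilon>: "0 \<le> \<epsilon>" "\<epsilon> \<le> 1"
    and \<alpha>: "0 \<le> \<alpha>" "\<alpha> \<le> 1"
    and \<gamma>: "\<gamma> > 0"
    and N: "N \<ge> 1"
    and r_pos: "\<And>i. i \<in> {1..N} \<Longrightarrow> r i > 0"
    and L: "L > 0"
    and Lip: "\<And>x y u. x \<in> X \<Longrightarrow> y \<in> X \<Longrightarrow> u \<in> Xi \<Longrightarrow> \<bar>g x u - g y u\<bar> \<le> L * infnorm (x - y)"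
    and D: "D > 0"
    and diam: "\<And>x y. x \<in> X \<Longrightarrow> y \<in> X \<Longrightarrow> infnorm (x - y) \<le> D"
  shows
    "let U = (\<lambda>i \<omega>. {u \<in> Xi. nrm (u - \<xi> i \<omega>) \<le> r i});
         v = (\<lambda>x \<omega>. (1 / real N) * (\<Sum>i\<in>{1..N}. if \<exists>u\<in>U i \<omega>. g x u + \<gamma> > 0 then 1 else 0));
         Xhat = (\<lambda>\<omega>. {x \<in> X. v x \<omega> \<le> \<alpha>});
         Xeps = {x \<in> X. measure M {\<omega> \<in> space M. g x (\<xi> (N + 1) \<omega>) > 0} \<le> \<epsilon>};
         p = (\<lambda>i. max 0 (\<epsilon> - \<rho> (real (N + 1 - i)) / r i))
     in \<exists>A \<in> sets M. {\<omega> \<in> space M. \<not> Xhat \<omega> \<subseteq> Xeps} \<subseteq> A \<and>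
          measure M A \<le> (L * D / \<gamma> + 1) ^ CARD('n) * poisson_binomial_cdf N p (\<alpha> * real N)"
  proof -
  interpret prob_space M by fact
  have XiB: "Xi \<in> sets borel" by (rule polish_borel[OF Xi_polish])
  have meas: "\<xi> i \<in> borel_measurable M" if "i \<ge> 1" for i
    using indep that unfolding indep_vars_def2 by auto
  define U where "U = (\<lambda>i \<omega>. {u \<in> Xi. nrm (u - \<xi> i \<omega>) \<le> r i})"
  define v where "v = (\<lambda>x \<omega>. (1 / real N) * (\<Sum>i\<in>{1..N}. if \<exists>u\<in>U i \<omega>. g x u + \<gamma> > 0 then 1 else 0))"
  define Xhat where "Xhat = (\<lambda>\<omega>. {x \<in> X. v x \<omega> \<le> \<alpha>})"
  define Xeps where "Xeps = {x \<in> X. measure M {\<omega> \<in> space M. g x (\<xi> (N + 1) \<omega>) > 0} \<le> \<epsilon>}"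
  define p where "p = (\<lambda>i. max 0 (\<epsilon> - \<rho> (real (N + 1 - i)) / r i))"
  define Psi where "Psi = poisson_binomial_cdf N p (\<alpha> * real N)"
  define mm where "mm = nat \<lfloor>\<alpha> * real N\<rfloor>"
  define s where "s = \<gamma> / L"
  have s_pos: "s > 0" unfolding s_def using \<gamma> L by simp
  have p01: "0 \<le> p i \<and> p i \<le> 1" if "i \<in> {1..N}" for i
  proof -
    have "\<rho> (real (N + 1 - i)) / r i \<ge> 0" using \<rho>_nonneg r_pos[OF that] by simp
    then show ?thesis unfolding p_def using \<epsilon> by auto
  qed
  have Psi_eq: "Psi = FP {1..N} p (\<lambda>k. k \<le> mm)"
    unfolding Psi_def mm_def by (rule poisson_binomial_cdf_FP)
  have Psi0: "Psi \<ge> 0" unfolding Psi_eq using p01 by (intro FP_nonneg) auto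
  define S where "S = (\<lambda>x0 i. {z. \<exists>u\<in>Xi \<inter> {u. g x0 u > 0}. nrm (u - z) < r i})"
  define Y where "Y = (\<lambda>x0 i. \<xi> i -` S x0 i \<inter> space M)"
  define Ev where "Ev = (\<lambda>x0. {\<omega> \<in> space M. card {i\<in>{1..N}. \<omega> \<in> Y x0 i} \<le> mm})"
  have Sb: "S x0 i \<in> sets borel" for x0 i
    unfolding S_def using open_S[OF nrm] by simp
  have Ysets: "Y x0 i \<in> sets M" if "i \<in> {1..N}" for x0 i
    unfolding Y_def using measurable_sets[OF meas Sb] that by auto
  have Ev_sets: "Ev x0 \<in> sets M" for x0
    unfolding Ev_def by (rule count_set_sets) (use M N Ysets in auto)
  have Ev_meas: "measure M (Ev x0) \<le> Psi" if x0: "x0 \<in> X - Xeps" for x0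
  proof -
    define q where "q = measure M {\<omega> \<in> space M. g x0 (\<xi> (N + 1) \<omega>) > 0}"
    have "\<not> q \<le> \<epsilon>" using x0 unfolding q_def Xeps_def by blast
    then have q: "q > \<epsilon>" by simp
    define G0 where "G0 = Xi \<inter> {u. g x0 u > 0}"
    have "g x0 -` {0<..} \<inter> space borel \<in> sets borel"
      by (rule measurable_sets[OF g_meas]) simp
    then have "{u. g x0 u > 0} \<in> sets borel" by (simp add: vimage_def)
    then have G0b: "G0 \<in> sets borel" unfolding G0_def using XiB by (intro sets.Int)
    have pre: "\<xi> (N + 1) -` G0 \<inter> space M = {\<omega> \<in> space M. g x0 (\<xi> (N + 1) \<omega>) > 0}"
      unfolding G0_def using \<xi>_in[of "N + 1"] by auto
    have lowb: "\<epsilon> - \<rho> (real (N + 1 - i)) / r i \<le> measure M (Y x0 i)" if i: "i \<in> {1..N}" for i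
    proof -
      define \<rho>i where "\<rho>i = \<rho> (real (N + 1 - i))"
      have ri: "r i > 0" using r_pos[OF i] .
      have \<rho>i0: "\<rho>i \<ge> 0" unfolding \<rho>i_def by (rule \<rho>_nonneg) simp
      have eq: "i + (N + 1 - i) = N + 1" using i by auto
      have W: "wasserstein1 nrm (distr M borel (\<xi> i)) (distr M borel (\<xi> (N + 1))) \<le> ennreal \<rho>i"
        using \<rho>_bound[of i "N + 1 - i"] i unfolding eq \<rho>i_def by auto
      have cb: "measure M (\<xi> (N + 1) -` G0 \<inter> space M) - (\<rho>i + (q - \<epsilon>) * r i) / r i
           \<le> measure M (\<xi> i -` {z. \<exists>u\<in>G0. nrm (u - z) < r i} \<inter> space M)"
        by (rule coupling_bound[OF M nrm meas meas W \<rho>i0 ri _ G0b]) (use i q ri in auto)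
      have "(\<rho>i + (q - \<epsilon>) * r i) / r i = \<rho>i / r i + (q - \<epsilon>)"
        using ri by (simp add: field_simps)
      moreover have "measure M (\<xi> (N + 1) -` G0 \<inter> space M) = q" unfolding pre q_def ..
      moreover have "Y x0 i = \<xi> i -` {z. \<exists>u\<in>G0. nrm (u - z) < r i} \<inter> space M"
        unfolding Y_def S_def G0_def ..
      ultimately show ?thesis using cb unfolding \<rho>i_def by simp
    qed
    have pY: "0 \<le> p i \<and> p i \<le> measure M (Y x0 i) \<and> measure M (Y x0 i) \<le> 1" if "i \<in> {1..N}" for i
    proof -
      have a: "measure M (Y x0 i) \<le> 1" by (rule prob_le_1)
      have b: "p i \<le> measure M (Y x0 i)" unfolding p_def
        by (intro max.boundedI measure_nonneg lowb[OF that])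
      show ?thesis using a b p01[OF that] by blast
    qed
    have ind: "measure M (\<Inter>i\<in>{1..N}. if i \<in> K then Y x0 i else space M - Y x0 i)
                 = (\<Prod>i\<in>{1..N}. if i \<in> K then measure M (Y x0 i) else 1 - measure M (Y x0 i))"
      if K: "K \<subseteq> {1..N}" for K
    proof -
      have isets: "indep_sets (\<lambda>i. {\<xi> i -` A \<inter> space M | A. A \<in> sets borel}) {1..}"
        using indep[unfolded indep_vars_def2] by (rule conjunct2)
      define A where "A = (\<lambda>i. if i \<in> K then Y x0 i else space M - Y x0 i)"
      have AP: "A \<in> Pi {1..N} (\<lambda>i. {\<xi> i -` A \<inter> space M | A. A \<in> sets borel})"
      proof
        fix i assume i: "i \<in> {1..N}"
        show "A i \<in> {\<xi> i -` A \<inter> space M | A. A \<in> sets borel}"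
        proof (cases "i \<in> K")
          case True
          then have "A i = \<xi> i -` S x0 i \<inter> space M" unfolding A_def Y_def by simp
          then show ?thesis using Sb[of x0 i] by blast
        next
          case False
          then have "A i = \<xi> i -` (- S x0 i) \<inter> space M" unfolding A_def Y_def by auto
          moreover have "- S x0 i \<in> sets borel" using Sb[of x0 i] by (rule borel_comp)
          ultimately show ?thesis by blast
        qed
      qed
      have sub1: "{1..N} \<subseteq> {1::nat..}" by auto
      have ne1: "{1..N} \<noteq> {}" using N by auto
      have fin1: "finite {1..N}" by simp
      have "measure M (\<Inter>i\<in>{1..N}. A i) = (\<Prod>i\<in>{1..N}. measure M (A i))"
        using isets[unfolded indep_sets_def, THEN conjunct2, rule_format, OF sub1 ne1 fin1 AP] .
      also have "\<dots> = (\<Prod>i\<in>{1..N}. if i \<in> K then measure M (Y x0 i) else 1 - measure M (Y x0 i))"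
      proof (rule prod.cong[OF refl])
        fix i assume i: "i \<in> {1..N}"
        show "measure M (A i) = (if i \<in> K then measure M (Y x0 i) else 1 - measure M (Y x0 i))"
          using prob_compl[OF Ysets[OF i]] unfolding A_def by simp
      qed
      finally show ?thesis unfolding A_def .
    qed
    have "measure M (Ev x0) = FP {1..N} (\<lambda>i. measure M (Y x0 i)) (\<lambda>k. k \<le> mm)"
      unfolding Ev_def by (rule prob_count_FP) (use M N Ysets ind in auto)
    also have "\<dots> \<le> FP {1..N} p (\<lambda>k. k \<le> mm)"
      by (rule FP_mono) (use pY in auto)
    finally show ?thesis unfolding Psi_eq .
  qed
  have Ev_cover: "\<omega> \<in> Ev x0" if x0: "x0 \<in> X" and x: "x \<in> X" and xs: "infnorm (x - x0) \<le> s"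
      and \<omega>: "\<omega> \<in> space M" and vx: "v x \<omega> \<le> \<alpha>" for x0 x \<omega>
  proof -
    have sub: "{i\<in>{1..N}. \<omega> \<in> Y x0 i} \<subseteq> {i\<in>{1..N}. \<exists>u\<in>U i \<omega>. g x u + \<gamma> > 0}"
    proof
      fix i assume i: "i \<in> {i\<in>{1..N}. \<omega> \<in> Y x0 i}"
      then obtain u where u: "u \<in> Xi" "g x0 u > 0" "nrm (u - \<xi> i \<omega>) < r i"
        unfolding Y_def S_def by auto
      have "\<bar>g x u - g x0 u\<bar> \<le> L * infnorm (x - x0)" by (rule Lip[OF x x0 u(1)])
      also have "\<dots> \<le> L * s" using xs L by (intro mult_left_mono) auto
      also have "\<dots> = \<gamma>" unfolding s_def using L by simp
      finally have "g x u + \<gamma> > 0" using u(2) by linarith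
      moreover have "u \<in> U i \<omega>" unfolding U_def using u by auto
      ultimately show "i \<in> {i\<in>{1..N}. \<exists>u\<in>U i \<omega>. g x u + \<gamma> > 0}" using i by auto
    qed
    have "(\<Sum>i\<in>{1..N}. if \<exists>u\<in>U i \<omega>. g x u + \<gamma> > 0 then (1::real) else 0)
        = real (card {i\<in>{1..N}. \<exists>u\<in>U i \<omega>. g x u + \<gamma> > 0})"
      by (simp add: sum.inter_filter[symmetric])
    then have "(1 / real N) * real (card {i\<in>{1..N}. \<exists>u\<in>U i \<omega>. g x u + \<gamma> > 0}) \<le> \<alpha>"
      using vx unfolding v_def by simp
    then have "real (card {i\<in>{1..N}. \<exists>u\<in>U i \<omega>. g x u + \<gamma> > 0}) \<le> \<alpha> * real N"
      using N by (simp add: field_simps)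
    moreover have "card {i\<in>{1..N}. \<omega> \<in> Y x0 i} \<le> card {i\<in>{1..N}. \<exists>u\<in>U i \<omega>. g x u + \<gamma> > 0}"
      by (rule card_mono[OF _ sub]) simp
    ultimately have "real (card {i\<in>{1..N}. \<omega> \<in> Y x0 i}) \<le> \<alpha> * real N" by linarith
    then have "card {i\<in>{1..N}. \<omega> \<in> Y x0 i} \<le> mm" unfolding mm_def by (rule le_nat_floor)
    then show ?thesis unfolding Ev_def using \<omega> by simp
  qed
  have main: "\<exists>A \<in> sets M. {\<omega> \<in> space M. \<not> Xhat \<omega> \<subseteq> Xeps} \<subseteq> A \<and>
          measure M A \<le> (L * D / \<gamma> + 1) ^ CARD('n) * Psi"
  proof (cases "X - Xeps = {}")
    case True
    then have "{\<omega> \<in> space M. \<not> Xhat \<omega> \<subseteq> Xeps} \<subseteq> {}" unfolding Xhat_def by auto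
    moreover have "0 \<le> (L * D / \<gamma> + 1) ^ CARD('n) * Psi"
      using L D \<gamma> Psi0 by simp
    ultimately show ?thesis by (intro bexI[of _ "{}"]) auto
  next
    case False
    then have Xne: "X \<noteq> {}" by auto
    define Kc where "Kc = nat \<lfloor>D / s\<rfloor>"
    obtain cell :: "real^'n \<Rightarrow> ('n \<Rightarrow> nat)" where
      cell1: "\<And>x. x \<in> X \<Longrightarrow> cell x \<in> (\<Pi>\<^sub>E j\<in>UNIV. {..Kc})" and
      cell2: "\<And>x y. x \<in> X \<Longrightarrow> y \<in> X \<Longrightarrow> cell x = cell y \<Longrightarrow> infnorm (x - y) \<le> s"
      using cell_cover[OF Xne s_pos diam] unfolding Kc_def by blast
    define C where "C = cell ` (X - Xeps)"
    define rep where "rep = (\<lambda>c. SOME x0. x0 \<in> X - Xeps \<and> cell x0 = c)"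
    have rep: "rep c \<in> X - Xeps \<and> cell (rep c) = c" if "c \<in> C" for c
    proof -
      have "\<exists>x0. x0 \<in> X - Xeps \<and> cell x0 = c" using that unfolding C_def by auto
      then show ?thesis unfolding rep_def by (rule someI_ex)
    qed
    have CP: "C \<subseteq> (\<Pi>\<^sub>E j\<in>UNIV. {..Kc})" unfolding C_def using cell1 by auto
    have finP: "finite (\<Pi>\<^sub>E j\<in>(UNIV::'n set). {..Kc})" by (intro finite_PiE) auto
    have finC: "finite C" using finite_subset[OF CP finP] .
    define A where "A = (\<Union>c\<in>C. Ev (rep c))"
    have Asets: "A \<in> sets M" unfolding A_def using finC Ev_sets by (intro sets.finite_UN) auto
    have cover: "{\<omega> \<in> space M. \<not> Xhat \<omega> \<subseteq> Xeps} \<subseteq> A"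
    proof
      fix \<omega> assume "\<omega> \<in> {\<omega> \<in> space M. \<not> Xhat \<omega> \<subseteq> Xeps}"
      then obtain x where \<omega>: "\<omega> \<in> space M" and x: "x \<in> X" "v x \<omega> \<le> \<alpha>" "x \<notin> Xeps"
        unfolding Xhat_def by auto
      define c where "c = cell x"
      have c: "c \<in> C" unfolding C_def c_def using x by auto
      have r0: "rep c \<in> X" "cell (rep c) = cell x" using rep[OF c] unfolding c_def by auto
      have "infnorm (x - rep c) \<le> s" using cell2[OF x(1) r0(1) r0(2)[symmetric]] .
      then have "\<omega> \<in> Ev (rep c)" using Ev_cover[OF r0(1) x(1) _ \<omega> x(2)] by simp
      then show "\<omega> \<in> A" unfolding A_def using c by auto
    qed
    have "measure M A \<le> (\<Sum>c\<in>C. measure M (Ev (rep c)))"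
      unfolding A_def using finC Ev_sets by (intro measure_UNION_le) auto
    also have "\<dots> \<le> (\<Sum>c\<in>C. Psi)"
      using rep Ev_meas by (intro sum_mono) auto
    also have "\<dots> = real (card C) * Psi" by simp
    also have "\<dots> \<le> (L * D / \<gamma> + 1) ^ CARD('n) * Psi"
    proof (rule mult_right_mono[OF _ Psi0])
      have "card C \<le> card (\<Pi>\<^sub>E j\<in>(UNIV::'n set). {..Kc})" by (rule card_mono[OF finP CP])
      also have "\<dots> = (Kc + 1) ^ CARD('n)" by (simp add: card_PiE)
      finally have "real (card C) \<le> real (Kc + 1) ^ CARD('n)"
        by (metis of_nat_le_iff of_nat_power)
      also have "\<dots> \<le> (L * D / \<gamma> + 1) ^ CARD('n)"
      proof (rule power_mono)
        have "D / s \<ge> 0" using D s_pos by simp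
        then have "real Kc \<le> D / s" unfolding Kc_def by linarith
        also have "D / s = L * D / \<gamma>" unfolding s_def using L \<gamma> by (simp add: field_simps)
        finally show "real (Kc + 1) \<le> L * D / \<gamma> + 1" by simp
      qed simp
      finally show "real (card C) \<le> (L * D / \<gamma> + 1) ^ CARD('n)" .
    qed
    finally show ?thesis using Asets cover by blast
  qed
  then show ?thesis unfolding Let_def U_def v_def Xhat_def Xeps_def p_def Psi_def by simp
qed

end
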